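(* Let $g_1,g_2$ be monic divisors of $x^m-1$ over $\mathbb{F}_q$, $v_1\in\mathcal{R}$, and let $\mathcal{D}_1$ be the QC code of length $2m$ generated by $(g_1,v_1g_1)$ and $(0,g_2)$. Then $\mathcal{D}_1$ is symplectic dual-containing iff $g_2\mid g_2^{\perp}(\overline{v_1}-v_1)$ and $g_2\mid g_1^{\perp}$.
   Context: $\mathcal{R}=\mathbb{F}_q[x]/(x^m-1)$, elements identified with representatives of degree $<m$; $[k]=(k_0,\dots,k_{m-1})$; $\overline{k}(x)=k(x^{-1})\bmod(x^m-1)$; $f^*(x)=x^{\deg f}f(1/x)$; for $k\in\mathcal{R}$, $f=\frac{x^m-1}{\gcd(k,x^m-1)}$, $k^{\perp}=f(0)^{-1}f^*$. "$g\mid a$" for $g\mid x^m-1$ means $g$ divides the representative of $a$. The QC code generated by $(u_{i1},u_{i2})$, $i=1,2$, is $\{([r_1u_{11}+r_2u_{21}],[r_1u_{12}+r_2u_{22}]):r_i\in\mathcal{R}\}\subseteq\mathbb{F}_q^{2m}$. Symplectic inner product on $\mathbb{F}_q^{2m}$: $\sum_{i=1}^m(u_iv_{m+i}-u_{m+i}v_i)$; dual-containing means $\mathcal{D}_1^{\perp_S}\subseteq\mathcal{D}_1$. *)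

theory Defs
  imports "HOL-Computational_Algebra.Computational_Algebra"
begin

text \<open>The ring R = F_q[x]/(x^m - 1): elements are polynomials, reduced modulo x^m - 1.\<close>

definition xm1 :: "nat \<Rightarrow> 'a::field poly" where
  "xm1 m = monom 1 m - 1"

definition rmod :: "nat \<Rightarrow> 'a::field poly \<Rightarrow> 'a poly" where
  "rmod m p = p mod xm1 m"

text \<open>bar k (x) = k(x^{-1}) mod (x^m - 1).\<close>
definition rbar :: "nat \<Rightarrow> 'a::field poly \<Rightarrow> 'a poly" where
  "rbar m k = rmod m (\<Sum>i\<le>degree k. monom (coeff k i) ((m - i mod m) mod m))"

text \<open>f^* = x^(deg f) f(1/x) is the library's reflect_poly;
  k^perp = f(0)^{-1} f^* with f = (x^m-1)/gcd(k, x^m-1).\<close>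
definition rperp :: "nat \<Rightarrow> 'a::field_gcd poly \<Rightarrow> 'a poly" where
  "rperp m k = (let f = xm1 m div gcd k (xm1 m) in smult (inverse (coeff f 0)) (reflect_poly f))"

text \<open>Vector [a] of a representative: coefficients 0..m-1; codewords of length 2m are
  functions nat => 'a, zero outside {0..<2m}.\<close>
definition codeword :: "nat \<Rightarrow> 'a::zero poly \<Rightarrow> 'a poly \<Rightarrow> nat \<Rightarrow> 'a" where
  "codeword m a b = (\<lambda>i. if i < m then coeff a i else if i < 2*m then coeff b (i - m) else 0)"

definition qc_code2 :: "nat \<Rightarrow> 'a::field poly \<Rightarrow> 'a poly \<Rightarrow> 'a poly \<Rightarrow> 'a poly \<Rightarrow> (nat \<Rightarrow> 'a) set" where
  "qc_code2 m u11 u12 u21 u22 =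
     {codeword m (rmod m (r1 * u11 + r2 * u21)) (rmod m (r1 * u12 + r2 * u22)) | r1 r2. True}"

definition symp :: "nat \<Rightarrow> (nat \<Rightarrow> 'a::comm_ring) \<Rightarrow> (nat \<Rightarrow> 'a) \<Rightarrow> 'a" where
  "symp m u v = (\<Sum>i<m. u i * v (m + i) - u (m + i) * v i)"

definition symp_dual :: "nat \<Rightarrow> (nat \<Rightarrow> 'a::comm_ring) set \<Rightarrow> (nat \<Rightarrow> 'a) set" where
  "symp_dual m D = {v. (\<forall>i\<ge>2*m. v i = 0) \<and> (\<forall>u\<in>D. symp m u v = 0)}"

definition symp_dual_containing :: "nat \<Rightarrow> (nat \<Rightarrow> 'a::comm_ring) set \<Rightarrow> bool" where
  "symp_dual_containing m D \<longleftrightarrow> symp_dual m D \<subseteq> D"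

end

theory Submission
  imports Defs
begin


lemma xm1_nz: "m > 0 \<Longrightarrow> xm1 m \<noteq> (0::'a::field poly)"
proof
  assume "m > 0" "xm1 m = (0::'a poly)"
  then have "coeff (xm1 m) m = (0::'a)" by simp
  with \<open>m>0\<close> show False unfolding xm1_def by simp
qed

lemma degree_xm1: "m > 0 \<Longrightarrow> degree (xm1 m :: 'a::field poly) = m"
proof (rule antisym)
  assume "m > 0"
  show "degree (xm1 m :: 'a poly) \<le> m" unfolding xm1_def
    by (metis degree_diff_le degree_monom_le degree_1 le0)
  show "m \<le> degree (xm1 m :: 'a poly)"
    by (rule le_degree) (use \<open>m>0\<close> in \<open>simp add: xm1_def\<close>)
qed

lemma coeff_xm1_0: "m > 0 \<Longrightarrow> coeff (xm1 m :: 'a::field poly) 0 = -1"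
  unfolding xm1_def by simp

lemma mod_sum_poly: "(sum f A) mod (z::'a::field poly) = sum (\<lambda>i. f i mod z) A"
  by (induction A rule: infinite_finite_induct) (auto simp: poly_mod_add_left)

lemma xm_mod: "monom 1 m mod xm1 m = (1::'a::field poly) mod xm1 m"
proof -
  have "monom 1 m = xm1 m + (1::'a poly)" by (simp add: xm1_def)
  then show ?thesis by (metis mod_add_self1 add.commute)
qed

lemma monom_mod_red: "monom c k mod xm1 m = (monom c (k mod m) :: 'a::field poly) mod xm1 m"
proof -
  have e: "monom c k = monom c (k mod m) * (monom 1 m) ^ (k div m)"
    by (simp add: mult_monom monom_power)
  have "(monom 1 m) ^ (k div m) mod xm1 m = (1::'a poly) mod xm1 m"
    by (metis power_mod xm_mod power_one)
  then show ?thesis unfolding e by (metis mod_mult_right_eq mult.right_neutral)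
qed

lemma monom_mod_cong: "k mod m = k' mod m \<Longrightarrow> monom c k mod xm1 m = (monom c k' :: 'a::field poly) mod xm1 m"
  by (metis monom_mod_red)



definition PP :: "nat \<Rightarrow> 'a::field poly \<Rightarrow> 'a poly" where
  "PP m p = pcompose p (monom 1 (m - 1))"

lemma pcompose_cong_inner:
  "q mod z = q' mod z \<Longrightarrow> pcompose p q mod z = pcompose p q' mod (z::'a::field poly)"
proof (induction p)
  case 0 then show ?case by simp
next
  case (pCons a p)
  then have "(q * pcompose p q) mod z = (q' * pcompose p q') mod z"
    by (metis mod_mult_cong)
  then show ?case by (simp add: pcompose_pCons poly_mod_add_left)
qed

lemma xm1_dvd_monom: "xm1 m dvd (monom 1 (m*k) - (1::'a::field poly))"
proof -
  have "(monom 1 m) ^ k mod xm1 m = (1::'a poly) mod xm1 m"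
    by (metis power_mod xm_mod power_one)
  then show ?thesis by (simp add: monom_power mod_eq_dvd_iff mult.commute)
qed

lemma pcompose_monom: "pcompose (monom c k) q = smult c (q ^ k)"
proof (induction k)
  case 0 then show ?case by (simp add: monom_0)
next
  case (Suc k) then show ?case by (simp add: monom_Suc pcompose_pCons)
qed

lemma nat_a1: "int (((m - 1) * i) mod m) = (- int i) mod int m" if "m > 0" for m i :: nat
proof -
  have "int ((m - 1) * i) = int m * int i + (- int i)" using that by (simp add: of_nat_diff algebra_simps)
  then show ?thesis by (metis add.commute mod_mult_self2 zmod_int)
qed
lemma nat_a2: "int ((m - i mod m) mod m) = (- int i) mod int m" if "m > 0" for m i :: nat
proof -
  have "int (m - i mod m) = int m + (- int (i mod m))" using that by (simp add: of_nat_diff less_imp_le)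
  then show ?thesis using int_ops(9) mod_minus_eq by auto
qed
lemma nat_a3: "((m - 1) * i) mod m = (m - i mod m) mod m" if "m > 0" for m i :: nat
  by (metis nat_a1 nat_a2 that of_nat_eq_iff)

lemma PP_monom: "PP m (monom c k) = monom c ((m - 1) * k)"
  by (simp add: PP_def pcompose_monom monom_power mult.commute smult_monom)

lemma PP_mult: "PP m (p * q) = PP m p * PP m q"
  by (simp add: PP_def pcompose_mult)
lemma PP_add: "PP m (p + q) = PP m p + PP m q"
  by (simp add: PP_def pcompose_add)
lemma PP_diff: "PP m (p - q) = PP m p - PP m q"
  by (simp add: PP_def pcompose_diff)

lemma PP_xm1: "xm1 m dvd PP m (xm1 m :: 'a::field poly)"
proof -
  have "PP m (xm1 m :: 'a poly) = monom 1 (m * (m - 1)) - 1"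
    by (simp add: xm1_def PP_diff PP_monom mult.commute) (simp add: PP_def pcompose_1)
  then show ?thesis using xm1_dvd_monom by metis
qed

lemma PP_mod: "p mod xm1 m = q mod xm1 m \<Longrightarrow> PP m p mod xm1 m = PP m (q :: 'a::field poly) mod xm1 m"
proof -
  assume "p mod xm1 m = q mod xm1 m"
  then have "xm1 m dvd p - q" by (simp add: mod_eq_dvd_iff)
  then obtain t where "p - q = xm1 m * t" by blast
  then have "PP m p - PP m q = PP m (xm1 m) * PP m t" by (metis PP_diff PP_mult)
  then have "xm1 m dvd PP m p - PP m q" using PP_xm1 by (metis dvd_mult2)
  then show ?thesis by (simp add: mod_eq_dvd_iff)
qed

lemma PP_PP: "m > 0 \<Longrightarrow> PP m (PP m p) mod xm1 m = (p :: 'a::field poly) mod xm1 m"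
proof -
  assume m: "m > 0"
  have "PP m (PP m p) = pcompose p (pcompose (monom 1 (m - 1)) (monom 1 (m - 1)))"
    by (simp add: PP_def pcompose_assoc)
  also have "pcompose (monom 1 (m - 1)) (monom 1 (m - 1)) = (monom 1 ((m - 1) * (m - 1)) :: 'a poly)"
    by (simp add: pcompose_monom monom_power)
  finally have e: "PP m (PP m p) = pcompose p (monom 1 ((m - 1) * (m - 1)))" .
  have "((m - 1) * (m - 1)) mod m = 1 mod m"
  proof -
    have "(m - 1) * (m - 1) + 2 * m = m * m + 1" using m
      by (cases m) (auto simp: algebra_simps)
    then have E: "(m - 1) * (m - 1) + m * 2 = 1 + m * m" by simp
    have "((m - 1) * (m - 1)) mod m = ((m - 1) * (m - 1) + m * 2) mod m" by simp
    also have "\<dots> = (1 + m * m) mod m" using E by simp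
    also have "\<dots> = 1 mod m" by (metis mod_mult_self2)
    finally show ?thesis .
  qed
  then have "monom 1 ((m - 1) * (m - 1)) mod xm1 m = (monom 1 1 :: 'a poly) mod xm1 m"
    by (rule monom_mod_cong)
  then have c1: "pcompose p (monom 1 ((m - 1) * (m - 1))) mod xm1 m = pcompose p (monom 1 1) mod xm1 m"
    by (rule pcompose_cong_inner)
  have c2: "pcompose p (monom 1 1) = p" by (simp add: monom_altdef)
  show ?thesis using e c1 c2 by metis
qed

lemma x_inv: "m > 0 \<Longrightarrow> (monom 1 k * PP m (monom 1 k)) mod xm1 m = (1 :: 'a::field poly) mod xm1 m"
proof -
  assume m: "m > 0"
  have "monom 1 k * PP m (monom 1 k) = (monom 1 (m * k) :: 'a poly)"
    using m by (simp add: PP_monom mult_monom algebra_simps)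
  moreover have "monom 1 (m*k) mod xm1 m = (1::'a poly) mod xm1 m"
    using xm1_dvd_monom by (metis mod_eq_dvd_iff)
  ultimately show ?thesis by simp
qed

lemma sum_mod_cong:
  "(\<And>i. i \<in> A \<Longrightarrow> f i mod z = g i mod z) \<Longrightarrow> sum f A mod z = sum g A mod (z::'a::field poly)"
  by (simp add: mod_sum_poly)

lemma rbar_PP: "m > 0 \<Longrightarrow> rbar m p = PP m p mod xm1 m"
proof -
  assume m: "m > 0"
  have "PP m p = PP m (\<Sum>i\<le>degree p. monom (coeff p i) i)"
    by (simp only: poly_as_sum_of_monoms)
  also have "\<dots> = (\<Sum>i\<le>degree p. PP m (monom (coeff p i) i))"
    by (simp only: PP_def pcompose_sum)
  finally have s1: "PP m p = (\<Sum>i\<le>degree p. PP m (monom (coeff p i) i))" .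
  have eq: "monom (coeff p i) ((m - i mod m) mod m) mod xm1 m = PP m (monom (coeff p i) i) mod xm1 m" for i
  proof -
    have "((m - 1) * i) mod m = (m - i mod m) mod m"
      using nat_a3[OF m] .
    then show ?thesis unfolding PP_monom by (intro monom_mod_cong) simp
  qed
  have "(\<Sum>i\<le>degree p. monom (coeff p i) ((m - i mod m) mod m)) mod xm1 m
     = (\<Sum>i\<le>degree p. PP m (monom (coeff p i) i)) mod xm1 m"
    by (rule sum_mod_cong) (rule eq)
  then show ?thesis unfolding rbar_def rmod_def by (simp only: s1)
qed



lemma dvd_mod_cong: "d dvd z \<Longrightarrow> p mod z = q mod z \<Longrightarrow> d dvd p \<longleftrightarrow> d dvd (q::'a::field poly)"
proof -
  assume d: "d dvd z" and e: "p mod z = q mod z"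
  then have "z dvd p - q" by (simp add: mod_eq_dvd_iff)
  then have "d dvd p - q" using d dvd_trans by blast
  then show ?thesis by (metis dvd_add_right_iff diff_add_cancel add.commute)
qed

lemma xm_mult_mod: "(monom 1 m * p) mod xm1 m = (p::'a::field poly) mod xm1 m"
  by (metis mod_mult_cong xm_mod mult_1)

lemma reflect_PP: "m > 0 \<Longrightarrow> (monom 1 (degree h) * PP m h) mod xm1 m = reflect_poly h mod xm1 m"
proof (induction h)
  case 0 then show ?case by (simp add: PP_def)
next
  case (pCons c p)
  show ?case
  proof (cases "p = 0")
    case True then show ?thesis by (simp add: PP_def monom_0)
  next
    case False
    let ?d = "degree p"
    have dg: "degree (pCons c p) = Suc ?d" using False by simp
    have pp: "PP m (pCons c p) = [:c:] + monom 1 (m - 1) * PP m p"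
      by (simp add: PP_def pcompose_pCons)
    have f2: "monom 1 (Suc ?d) * monom 1 (m - 1) = (monom 1 m * monom 1 ?d :: 'a poly)"
      using pCons.prems by (simp add: mult_monom add.commute)
    have f1: "monom 1 (Suc ?d) * [:c:] = monom c (Suc ?d)"
      by (simp add: smult_monom)
    have "monom 1 (Suc ?d) * PP m (pCons c p) = monom 1 (Suc ?d) * [:c:] + (monom 1 (Suc ?d) * monom 1 (m - 1)) * PP m p"
      unfolding pp by (simp only: distrib_left mult.assoc)
    also have "\<dots> = monom c (Suc ?d) + monom 1 m * (monom 1 ?d * PP m p)"
      by (simp only: f1 f2 mult.assoc)
    finally have e: "monom 1 (Suc ?d) * PP m (pCons c p) = monom c (Suc ?d) + monom 1 m * (monom 1 ?d * PP m p)" .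
    have "(monom 1 (Suc ?d) * PP m (pCons c p)) mod xm1 m = monom c (Suc ?d) mod xm1 m + (monom 1 ?d * PP m p) mod xm1 m"
      unfolding e by (simp add: poly_mod_add_left xm_mult_mod)
    also have "\<dots> = monom c (Suc ?d) mod xm1 m + reflect_poly p mod xm1 m"
      using pCons.IH pCons.prems by simp
    also have "\<dots> = reflect_poly (pCons c p) mod xm1 m"
      using False by (subst reflect_poly_pCons'[OF False]) (simp add: poly_mod_add_left add.commute)
    finally show ?thesis using dg by simp
  qed
qed

lemma reflect_xm1: "m > 0 \<Longrightarrow> reflect_poly (xm1 m :: 'a::field poly) = - xm1 m"
proof -
  assume m: "m > 0"
  have "xm1 m = pCons (-1) (monom (1::'a) (m - 1))"
    using m unfolding xm1_def by (cases m) (auto simp: monom_Suc one_pCons)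
  then have "reflect_poly (xm1 m) = reflect_poly (monom (1::'a) (m - 1)) + monom (-1) m"
    using m by (simp add: reflect_poly_pCons' degree_monom_eq)
  also have "reflect_poly (monom (1::'a) (m - 1)) = 1"
    by (intro poly_eqI) (auto simp: coeff_reflect_poly degree_monom_eq coeff_monom)
  finally show ?thesis by (simp add: xm1_def flip: minus_monom)
qed



lemma reflect_dvd_xm1: "m > 0 \<Longrightarrow> h dvd xm1 m \<Longrightarrow> reflect_poly h dvd (xm1 m :: 'a::field poly)"
proof -
  assume m: "m > 0" and "h dvd xm1 m"
  then obtain k where "xm1 m = h * k" by blast
  then have "- xm1 m = reflect_poly h * reflect_poly k" by (metis reflect_xm1[OF m] reflect_poly_mult)
  then show ?thesis by (metis dvd_minus_iff dvd_triv_left)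
qed

lemma claimA:
  assumes m: "m > 0" and hd: "h dvd xm1 m"
  shows "h dvd PP m a \<longleftrightarrow> reflect_poly h dvd (a :: 'a::field poly)"
proof -
  define X :: "'a poly" where "X = monom 1 (degree h)"
  define U where "U = PP m X"
  define N :: "'a poly" where "N = xm1 m"
  have R1: "(X * PP m h) mod N = reflect_poly h mod N" unfolding X_def N_def by (rule reflect_PP[OF m])
  have Inv: "(X * U) mod N = 1 mod N" unfolding X_def U_def N_def by (rule x_inv[OF m])
  have rd: "reflect_poly h dvd N" unfolding N_def by (rule reflect_dvd_xm1[OF m hd])
  have hN: "h dvd N" unfolding N_def by (rule hd)
  have PPh: "PP m h mod N = (U * reflect_poly h) mod N"
  proof -
    have "(U * reflect_poly h) mod N = (U * (X * PP m h)) mod N"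
      using R1 by (metis mod_mult_right_eq)
    also have "\<dots> = ((X * U) * PP m h) mod N" by (simp add: ac_simps)
    also have "\<dots> = (1 * PP m h) mod N" using Inv by (metis mod_mult_left_eq)
    finally show ?thesis by simp
  qed
  show ?thesis
  proof
    assume "h dvd PP m a"
    then obtain t where t: "PP m a = h * t" by blast
    have "a mod N = PP m (PP m a) mod N" using PP_PP[OF m] unfolding N_def by metis
    also have "\<dots> = (PP m h * PP m t) mod N" by (simp add: t PP_mult)
    also have "\<dots> = ((U * reflect_poly h) * PP m t) mod N" using PPh by (metis mod_mult_left_eq)
    also have "\<dots> = (reflect_poly h * (U * PP m t)) mod N" by (simp add: ac_simps)
    finally have "a mod N = (reflect_poly h * (U * PP m t)) mod N" .
    then show "reflect_poly h dvd a" using dvd_mod_cong[OF rd] by (metis dvd_triv_left)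
  next
    assume "reflect_poly h dvd a"
    then obtain s where s: "a = reflect_poly h * s" by blast
    have "PP m (reflect_poly h) mod N = PP m (X * PP m h) mod N"
      using PP_mod R1 unfolding N_def by metis
    also have "\<dots> = (U * PP m (PP m h)) mod N" by (simp add: PP_mult U_def)
    also have "\<dots> = (U * h) mod N" using PP_PP[OF m] unfolding N_def by (metis mod_mult_right_eq)
    finally have e: "PP m (reflect_poly h) mod N = (U * h) mod N" .
    have "PP m a mod N = (PP m (reflect_poly h) * PP m s) mod N" by (simp add: s PP_mult)
    also have "\<dots> = ((U * h) * PP m s) mod N" using e by (metis mod_mult_left_eq)
    also have "\<dots> = (h * (U * PP m s)) mod N" by (simp add: ac_simps)
    finally have "PP m a mod N = (h * (U * PP m s)) mod N" .
    then show "h dvd PP m a" using dvd_mod_cong[OF hN] by (metis dvd_triv_left)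
  qed
qed



lemma modlem: "(k + (m - 1) * j) mod m = 0 \<longleftrightarrow> j = k" if jm: "j < m" and km: "k < m" for m j k :: nat
proof -
  obtain n where n: "m = Suc n" using jm by (cases m) auto
  have eq: "int (k + (m - 1) * j) = (int k - int j) + int m * int j" using n by (simp add: algebra_simps)
  have A: "int ((k + (m - 1) * j) mod m) = (int k - int j) mod int m"
    unfolding of_nat_mod eq by simp
  have B: "(int k - int j) mod int m = 0 \<longleftrightarrow> j = k"
  proof (cases "j \<le> k")
    case True
    then have "(int k - int j) mod int m = int k - int j" using jm km by (intro mod_pos_pos_trivial) auto
    then show ?thesis using True by auto
  next
    case False
    have "(int k - int j) mod int m = (int k - int j + int m) mod int m" by simp
    also have "\<dots> = int k - int j + int m" using jm km False by (intro mod_pos_pos_trivial) auto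
    finally show ?thesis using False jm km by auto
  qed
  show ?thesis using A B by (metis of_nat_eq_0_iff)
qed

lemma coeff_sum_monom: "coeff (\<Sum>j<m. monom (c j) (s j)) n = (\<Sum>j<m. if s j = n then c j else 0)"
  by (simp add: coeff_sum coeff_monom)

lemma coeff_vp: "coeff (\<Sum>i<m. monom (c i) i) n = (if n < m then c n else 0)"
  by (simp add: coeff_sum coeff_monom)

lemma degree_lt_m: "m > 0 \<Longrightarrow> (\<And>n. n \<ge> m \<Longrightarrow> coeff p n = 0) \<Longrightarrow> degree p < m"
proof -
  assume m: "m > 0" and z: "\<And>n. n \<ge> m \<Longrightarrow> coeff p n = 0"
  have "degree p \<le> m - 1" by (rule degree_le) (use z m in auto)
  then show ?thesis using m by simp
qed

lemma as_vp: "degree p < m \<Longrightarrow> p = (\<Sum>i<m. monom (coeff p i) i)"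
  by (rule poly_eqI) (auto simp: coeff_vp coeff_eq_0)

lemma degree_mod_xm1: "m > 0 \<Longrightarrow> degree (p mod xm1 m :: 'a::field poly) < m"
proof -
  assume m: "m > 0"
  have "p mod xm1 m = 0 \<or> degree (p mod xm1 m) < degree (xm1 m :: 'a poly)"
    by (rule degree_mod_less[OF xm1_nz[OF m]])
  then show ?thesis
  proof
    assume "p mod xm1 m = 0" then show ?thesis using m by simp
  next
    assume "degree (p mod xm1 m) < degree (xm1 m :: 'a poly)"
    then show ?thesis using degree_xm1[OF m, where 'a='a] by simp
  qed
qed

lemma IP_monom:
  assumes m: "m > 0" and k: "k < m" and b: "degree b < m"
  shows "coeff ((monom 1 k * PP m b) mod xm1 m) 0 = coeff (b :: 'a::field poly) k"
proof -
  let ?s = "\<lambda>j. (k + (m - 1) * j) mod m"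
  let ?Q = "(\<Sum>j<m. monom (coeff b j) (?s j)) :: 'a poly"
  have "PP m b = PP m (\<Sum>j<m. monom (coeff b j) j)" using as_vp[OF b] by simp
  also have "\<dots> = (\<Sum>j<m. PP m (monom (coeff b j) j))" by (simp only: PP_def pcompose_sum)
  also have "\<dots> = (\<Sum>j<m. monom (coeff b j) ((m - 1) * j))" by (simp only: PP_monom)
  finally have "monom 1 k * PP m b = (\<Sum>j<m. monom (coeff b j) (k + (m - 1) * j))"
    by (simp add: sum_distrib_left mult_monom)
  then have "(monom 1 k * PP m b) mod xm1 m = (\<Sum>j<m. monom (coeff b j) (k + (m - 1) * j)) mod xm1 m"
    by simp
  also have "\<dots> = ?Q mod xm1 m"
    by (rule sum_mod_cong) (rule monom_mod_red)
  also have "?Q mod xm1 m = ?Q"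
  proof (rule mod_poly_less)
    have "degree ?Q < m"
    proof (rule degree_lt_m[OF m])
      fix n assume n: "n \<ge> m"
      have "\<And>j. ?s j \<noteq> n" using mod_less_divisor[OF m] n by (metis not_less)
      then show "coeff ?Q n = 0" by (simp add: coeff_sum_monom)
    qed
    then show "degree ?Q < degree (xm1 m :: 'a poly)" using degree_xm1[OF m, where 'a='a] by simp
  qed
  finally have "coeff ((monom 1 k * PP m b) mod xm1 m) 0 = (\<Sum>j<m. if ?s j = 0 then coeff b j else 0)"
    by (simp add: coeff_sum_monom)
  also have "\<dots> = (\<Sum>j<m. if j = k then coeff b j else 0)"
  proof (rule sum.cong)
    fix j assume "j \<in> {..<m}"
    then have e: "(?s j = 0) = (j = k)" using modlem[of j m k] k by simp
    show "(if ?s j = 0 then coeff b j else 0) = (if j = k then coeff b j else 0)"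
      by (simp only: e)
  qed simp
  also have "\<dots> = coeff b k" using k by simp
  finally show ?thesis .
qed

lemma IP:
  assumes m: "m > 0" and b: "degree b < m"
  shows "coeff ((p * PP m b) mod xm1 m) 0 = (\<Sum>i<m. coeff (p mod xm1 m) i * coeff (b :: 'a::field poly) i)"
proof -
  let ?N = "xm1 m :: 'a poly"
  define c where "c = (\<lambda>i. coeff (p mod ?N) i)"
  have pm: "p mod ?N = (\<Sum>i<m. smult (c i) (monom 1 i))"
    using as_vp[OF degree_mod_xm1[OF m, of p]] by (simp add: smult_monom c_def)
  have "(p * PP m b) mod ?N = ((p mod ?N) * PP m b) mod ?N" by (simp add: mod_mult_left_eq)
  also have "\<dots> = (\<Sum>i<m. smult (c i) ((monom 1 i * PP m b) mod ?N))"
    by (simp add: pm sum_distrib_right mod_sum_poly mod_smult_left)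
  finally show ?thesis by (simp add: coeff_sum IP_monom[OF m _ b] c_def)
qed

lemma Zlem:
  assumes m: "m > 0" and z: "\<And>r. coeff ((r * w) mod xm1 m) 0 = 0"
  shows "(w :: 'a::field poly) mod xm1 m = 0"
proof (rule poly_eqI)
  fix k
  show "coeff (w mod xm1 m) k = coeff 0 k"
  proof (cases "k < m")
    case True
    have "coeff ((w * PP m (monom 1 k)) mod xm1 m) 0 = (\<Sum>i<m. coeff (w mod xm1 m) i * coeff (monom 1 k :: 'a poly) i)"
      by (rule IP[OF m]) (use True in \<open>simp add: degree_monom_eq\<close>)
    also have "\<dots> = (\<Sum>i<m. if i = k then coeff (w mod xm1 m) i else 0)"
      by (rule sum.cong) (auto simp: coeff_monom)
    also have "\<dots> = coeff (w mod xm1 m) k" using True by simp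
    finally show ?thesis using z[of "PP m (monom 1 k)"] by (simp add: mult.commute)
  next
    case False
    then show ?thesis using degree_mod_xm1[OF m, of w] by (simp add: coeff_eq_0)
  qed
qed



lemma setup_g:
  assumes m: "m > 0" and lc: "lead_coeff g = 1" and gd: "g dvd xm1 m"
  shows "g * (xm1 m div g) = (xm1 m :: 'a::{field_gcd} poly)" and "g \<noteq> 0"
    and "coeff (xm1 m div g) 0 \<noteq> 0"
    and "rperp m g = smult (inverse (coeff (xm1 m div g) 0)) (reflect_poly (xm1 m div g))"
proof -
  show e: "g * (xm1 m div g) = xm1 m" using gd by simp
  show "g \<noteq> 0" using lc by auto
  have "coeff g 0 * coeff (xm1 m div g) 0 = coeff (xm1 m :: 'a poly) 0"
    by (subst e[symmetric]) (simp add: coeff_mult_0)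
  then show "coeff (xm1 m div g) 0 \<noteq> 0" using coeff_xm1_0[OF m, where 'a='a] by auto
  have "normalize g = g" using lc by (simp add: normalize_poly_eq_map_poly)
  then have "gcd g (xm1 m) = g" using gcd_proj1_if_dvd[OF gd] by simp
  then show "rperp m g = smult (inverse (coeff (xm1 m div g) 0)) (reflect_poly (xm1 m div g))"
    by (simp add: rperp_def Let_def)
qed

lemma dual_div:
  assumes m: "m > 0" and e1: "g1 * h1 = xm1 m" and e2: "g2 * h2 = (xm1 m :: 'a::field poly)"
    and c1: "coeff h1 0 \<noteq> 0" and g2: "g2 \<noteq> 0"
    and d: "g2 dvd reflect_poly h1"
  shows "g1 dvd reflect_poly h2"
proof -
  obtain k where k: "reflect_poly h1 = g2 * k" using d by blast
  have "h1 = reflect_poly g2 * reflect_poly k"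
    using k c1 by (metis reflect_poly_mult reflect_poly_reflect_poly)
  then have N1: "xm1 m = g1 * (reflect_poly g2 * reflect_poly k)" using e1 by simp
  have "- xm1 m = reflect_poly g2 * reflect_poly h2" using e2 reflect_xm1[OF m] by (metis reflect_poly_mult)
  then have "reflect_poly g2 * reflect_poly h2 = reflect_poly g2 * (- (g1 * reflect_poly k))"
    using N1 by (simp add: algebra_simps)
  moreover have "reflect_poly g2 \<noteq> 0" using g2 by simp
  ultimately have "reflect_poly h2 = - (g1 * reflect_poly k)" by (metis mult_left_cancel)
  then show ?thesis by (metis dvd_minus_iff dvd_triv_left)
qed

lemma codeword_inj:
  assumes "degree a < m" "degree b < m" "degree a' < m" "degree b' < m"
    and "codeword m a b = codeword m a' (b' :: 'a::zero poly)"
  shows "a = a' \<and> b = b'"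
proof
  show "a = a'"
  proof (rule poly_eqI)
    fix n show "coeff a n = coeff a' n"
    proof (cases "n < m")
      case True then show ?thesis using fun_cong[OF assms(5), of n] by (simp add: codeword_def)
    next
      case False then show ?thesis using assms by (simp add: coeff_eq_0)
    qed
  qed
  show "b = b'"
  proof (rule poly_eqI)
    fix n show "coeff b n = coeff b' n"
    proof (cases "n < m")
      case True then show ?thesis using fun_cong[OF assms(5), of "m + n"] by (simp add: codeword_def)
    next
      case False then show ?thesis using assms by (simp add: coeff_eq_0)
    qed
  qed
qed

lemma codeword_rep:
  assumes m: "m > 0" and z: "\<forall>i\<ge>2*m. v i = 0"
  shows "v = codeword m (\<Sum>i<m. monom (v i) i) (\<Sum>i<m. monom (v (m + i)) i)"
proof
  fix i show "v i = codeword m (\<Sum>i<m. monom (v i) i) (\<Sum>i<m. monom (v (m + i)) i) i"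
    using z by (auto simp: codeword_def coeff_vp)
qed

lemma degree_vp: "m > 0 \<Longrightarrow> degree (\<Sum>i<m. monom (c i) i) < m"
  by (rule degree_lt_m) (auto simp: coeff_vp)

lemma symp_codeword:
  "symp m (codeword m u1 u2) (codeword m a b) =
     (\<Sum>i<m. coeff u1 i * coeff b i) - (\<Sum>i<m. coeff u2 i * coeff a i)"
  by (simp add: symp_def codeword_def sum_subtractf)



lemma dvd_mod_self: "z dvd (p mod z - (p::'a::field poly))"
  by (simp add: mod_eq_dvd_iff[symmetric])

lemma memD:
  assumes m: "m > 0" and g1N: "g1 dvd xm1 m" and g2N: "g2 dvd xm1 m"
    and da: "degree a < m" and db: "degree b < m"
  shows "codeword m a b \<in> qc_code2 m g1 (rmod m (v1 * g1)) 0 g2 \<longleftrightarrow>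
         g1 dvd a \<and> g2 dvd b - v1 * (a :: 'a::field poly)"
proof -
  let ?N = "xm1 m :: 'a poly"
  have degN: "degree ?N = m" by (rule degree_xm1[OF m])
  have amod: "a mod ?N = a" by (rule mod_poly_less) (simp add: degN da)
  have bmod: "b mod ?N = b" by (rule mod_poly_less) (simp add: degN db)
  show ?thesis
  proof
    assume "codeword m a b \<in> qc_code2 m g1 (rmod m (v1 * g1)) 0 g2"
    then obtain r1 r2 where cw: "codeword m a b = codeword m (rmod m (r1 * g1 + r2 * 0)) (rmod m (r1 * rmod m (v1 * g1) + r2 * g2))"
      unfolding qc_code2_def by blast
    have "a = rmod m (r1 * g1 + r2 * 0) \<and> b = rmod m (r1 * rmod m (v1 * g1) + r2 * g2)"
      by (rule codeword_inj[OF da db _ _ cw]) (simp_all add: rmod_def degree_mod_xm1[OF m])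
    then have ea: "a = (r1 * g1) mod ?N" and eb: "b = (r1 * ((v1 * g1) mod ?N) + r2 * g2) mod ?N"
      by (simp_all add: rmod_def)
    have "g1 dvd a" using ea g1N by (metis dvd_mod dvd_triv_right)
    moreover have "g2 dvd b - v1 * a"
    proof -
      have N1: "?N dvd b - (r1 * ((v1 * g1) mod ?N) + r2 * g2)" using eb dvd_mod_self by metis
      have N2: "?N dvd r1 * ((v1 * g1) mod ?N - v1 * g1)" using dvd_mod_self by (metis dvd_mult)
      have N3: "?N dvd v1 * (a - r1 * g1)" using ea dvd_mod_self by (metis dvd_mult)
      have "(b - v1 * a) - r2 * g2 = (b - (r1 * ((v1 * g1) mod ?N) + r2 * g2)) + r1 * ((v1 * g1) mod ?N - v1 * g1) - v1 * (a - r1 * g1)"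
        by (simp add: algebra_simps)
      then have "?N dvd (b - v1 * a) - r2 * g2" using N1 N2 N3 by (metis dvd_add dvd_diff)
      then have "g2 dvd (b - v1 * a) - r2 * g2" using g2N dvd_trans by blast
      then show ?thesis by (metis dvd_diff_commute dvd_triv_right dvd_add_right_iff diff_add_cancel)
    qed
    ultimately show "g1 dvd a \<and> g2 dvd b - v1 * a" ..
  next
    assume "g1 dvd a \<and> g2 dvd b - v1 * a"
    then obtain r1 r2 where r1: "a = g1 * r1" and r2: "b - v1 * a = g2 * r2" by blast
    have A: "rmod m (r1 * g1 + r2 * 0) = a" using amod r1 by (simp add: rmod_def mult.commute)
    have "(r1 * ((v1 * g1) mod ?N) + r2 * g2) mod ?N = (r1 * (v1 * g1) + r2 * g2) mod ?N"
      by (metis mod_add_left_eq mod_mult_right_eq)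
    also have "r1 * (v1 * g1) + r2 * g2 = b" using r1 r2 by (simp add: algebra_simps)
    finally have B: "rmod m (r1 * rmod m (v1 * g1) + r2 * g2) = b" using bmod by (simp add: rmod_def)
    show "codeword m a b \<in> qc_code2 m g1 (rmod m (v1 * g1)) 0 g2"
      unfolding qc_code2_def using A B by (metis (mono_tags, lifting) mem_Collect_eq)
  qed
qed



lemma coeff_mod_diff: "coeff ((p - q) mod z) n = coeff (p mod z) n - coeff (q mod (z::'a::field poly)) n"
  by (simp add: poly_mod_diff_left)

lemma symp_val:
  assumes m: "m > 0" and da: "degree a < m" and db: "degree b < m"
  shows "symp m (codeword m (rmod m (r1 * g1 + r2 * 0)) (rmod m (r1 * rmod m (v1 * g1) + r2 * g2))) (codeword m a b)
       = coeff ((r1 * (g1 * (PP m b - v1 * PP m a)) - r2 * (g2 * PP m a)) mod xm1 m) 0"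
    (is "?L = ?R")
proof -
  let ?N = "xm1 m :: 'a::field poly"
  let ?X = "r1 * rmod m (v1 * g1) + r2 * g2"
  have "?L = coeff ((r1 * g1 * PP m b) mod ?N) 0 - coeff ((?X * PP m a) mod ?N) 0"
    unfolding symp_codeword using IP[OF m db, of "r1 * g1"] IP[OF m da, of ?X] by (simp add: rmod_def)
  also have "\<dots> = coeff ((r1 * g1 * PP m b - ?X * PP m a) mod ?N) 0" by (simp add: coeff_mod_diff)
  also have "(r1 * g1 * PP m b - ?X * PP m a) mod ?N = (r1 * (g1 * (PP m b - v1 * PP m a)) - r2 * (g2 * PP m a)) mod ?N"
  proof -
    have "?N dvd r1 * PP m a * ((v1 * g1) mod ?N - v1 * g1)" using dvd_mod_self by (metis dvd_mult)
    moreover have "(r1 * g1 * PP m b - ?X * PP m a) - (r1 * (g1 * (PP m b - v1 * PP m a)) - r2 * (g2 * PP m a))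
       = - (r1 * PP m a * ((v1 * g1) mod ?N - v1 * g1))"
      by (simp add: rmod_def algebra_simps)
    ultimately show ?thesis by (simp add: mod_eq_dvd_iff)
  qed
  finally show ?thesis .
qed

lemma memDual:
  assumes m: "m > 0" and e1: "g1 * h1 = xm1 m" and e2: "g2 * h2 = xm1 m"
    and g1: "g1 \<noteq> 0" and g2: "g2 \<noteq> 0"
    and da: "degree a < m" and db: "degree b < m"
  shows "codeword m a b \<in> symp_dual m (qc_code2 m g1 (rmod m (v1 * g1)) 0 g2) \<longleftrightarrow>
         reflect_poly h2 dvd a \<and> reflect_poly h1 dvd b - PP m v1 * (a :: 'a::field poly)"
proof -
  let ?N = "xm1 m :: 'a poly"
  let ?w1 = "g1 * (PP m b - v1 * PP m a)"
  let ?w2 = "g2 * PP m a"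
  have h1N: "h1 dvd ?N" using e1 by (metis dvd_triv_right)
  have h2N: "h2 dvd ?N" using e2 by (metis dvd_triv_right)
  have step1: "codeword m a b \<in> symp_dual m (qc_code2 m g1 (rmod m (v1 * g1)) 0 g2) \<longleftrightarrow>
      (\<forall>r1 r2. coeff ((r1 * ?w1 - r2 * ?w2) mod ?N) 0 = 0)"
  proof -
    let ?D = "qc_code2 m g1 (rmod m (v1 * g1)) 0 g2"
    let ?c = "\<lambda>r1 r2. codeword m (rmod m (r1 * g1 + r2 * 0)) (rmod m (r1 * rmod m (v1 * g1) + r2 * g2))"
    have z: "\<forall>i\<ge>2*m. codeword m a b i = 0" by (simp add: codeword_def)
    have D: "?D = {?c r1 r2 | r1 r2. True}" by (simp add: qc_code2_def)
    have "(\<forall>u\<in>?D. symp m u (codeword m a b) = 0) \<longleftrightarrow> (\<forall>r1 r2. symp m (?c r1 r2) (codeword m a b) = 0)"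
      unfolding D by blast
    also have "\<dots> \<longleftrightarrow> (\<forall>r1 r2. coeff ((r1 * ?w1 - r2 * ?w2) mod ?N) 0 = 0)"
      by (simp only: symp_val[OF m da db])
    finally show ?thesis unfolding symp_dual_def using z by blast
  qed
  have step2: "(\<forall>r1 r2. coeff ((r1 * ?w1 - r2 * ?w2) mod ?N) 0 = 0) \<longleftrightarrow> ?N dvd ?w1 \<and> ?N dvd ?w2"
  proof
    assume H: "\<forall>r1 r2. coeff ((r1 * ?w1 - r2 * ?w2) mod ?N) 0 = 0"
    have "?w1 mod ?N = 0"
    proof (rule Zlem[OF m])
      fix r show "coeff ((r * ?w1) mod ?N) 0 = 0"
        using H[rule_format, of r 0] by simp
    qed
    moreover have "?w2 mod ?N = 0"
    proof (rule Zlem[OF m])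
      fix r show "coeff ((r * ?w2) mod ?N) 0 = 0"
        using H[rule_format, of 0 "- r"] by simp
    qed
    ultimately show "?N dvd ?w1 \<and> ?N dvd ?w2" by auto
  next
    assume "?N dvd ?w1 \<and> ?N dvd ?w2"
    then have "\<forall>r1 r2. ?N dvd r1 * ?w1 - r2 * ?w2" by auto
    then show "\<forall>r1 r2. coeff ((r1 * ?w1 - r2 * ?w2) mod ?N) 0 = 0" by (auto simp: dvd_eq_mod_eq_0)
  qed
  have s3: "?N dvd ?w2 \<longleftrightarrow> reflect_poly h2 dvd a"
  proof -
    have "?N dvd ?w2 \<longleftrightarrow> h2 dvd PP m a" using g2 by (simp flip: e2)
    also have "\<dots> \<longleftrightarrow> reflect_poly h2 dvd a" by (rule claimA[OF m h2N])
    finally show ?thesis .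
  qed
  have s4: "?N dvd ?w1 \<longleftrightarrow> reflect_poly h1 dvd b - PP m v1 * a"
  proof -
    have "?N dvd ?w1 \<longleftrightarrow> h1 dvd PP m b - v1 * PP m a" using g1 by (simp flip: e1)
    also have "\<dots> \<longleftrightarrow> h1 dvd PP m (b - PP m v1 * a)"
    proof (rule dvd_mod_cong[OF h1N])
      have "PP m (PP m v1) mod ?N = v1 mod ?N" by (rule PP_PP[OF m])
      then have "(PP m (PP m v1) * PP m a) mod ?N = (v1 * PP m a) mod ?N" by (metis mod_mult_left_eq)
      then show "(PP m b - v1 * PP m a) mod ?N = PP m (b - PP m v1 * a) mod ?N"
        by (simp only: PP_diff PP_mult) (metis mod_diff_right_eq)
    qed
    also have "\<dots> \<longleftrightarrow> reflect_poly h1 dvd b - PP m v1 * a" by (rule claimA[OF m h1N])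
    finally show ?thesis .
  qed
  show ?thesis using step1 step2 s3 s4 by blast
qed



theorem mainTheorem9:
  fixes g1 g2 v1 :: "'a::{finite,field_gcd} poly" and m :: nat
  assumes "m > 0"
    and "lead_coeff g1 = 1" and "lead_coeff g2 = 1"
    and "g1 dvd xm1 m" and "g2 dvd xm1 m"
    and "degree v1 < m"
  shows "symp_dual_containing m (qc_code2 m g1 (rmod m (v1 * g1)) 0 g2) \<longleftrightarrow>
         (g2 dvd rmod m (rperp m g2 * (rbar m v1 - v1)) \<and> g2 dvd rmod m (rperp m g1))"
proof -
  note m = assms(1)
  let ?N = "xm1 m :: 'a poly"
  define h1 where "h1 = ?N div g1"
  define h2 where "h2 = ?N div g2"
  define P1 where "P1 = PP m v1"
  let ?D = "qc_code2 m g1 (rmod m (v1 * g1)) 0 g2"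
  have e1: "g1 * h1 = ?N" and g1: "g1 \<noteq> 0" and c1: "coeff h1 0 \<noteq> 0"
    and rp1: "rperp m g1 = smult (inverse (coeff h1 0)) (reflect_poly h1)"
    using setup_g[OF m assms(2) assms(4), folded h1_def] by blast+
  have e2: "g2 * h2 = ?N" and g2: "g2 \<noteq> 0" and c2: "coeff h2 0 \<noteq> 0"
    and rp2: "rperp m g2 = smult (inverse (coeff h2 0)) (reflect_poly h2)"
    using setup_g[OF m assms(3) assms(5), folded h2_def] by blast+
  have g1N: "g1 dvd ?N" and g2N: "g2 dvd ?N" using assms(4,5) by auto
  have rh1N: "reflect_poly h1 dvd ?N" using reflect_dvd_xm1[OF m] e1 by (metis dvd_triv_right)
  have rh2N: "reflect_poly h2 dvd ?N" using reflect_dvd_xm1[OF m] e2 by (metis dvd_triv_right)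
  have degN: "degree ?N = m" by (rule degree_xm1[OF m])
  have L: "symp_dual_containing m ?D \<longleftrightarrow>
     (\<forall>a b. degree a < m \<longrightarrow> degree b < m \<longrightarrow> reflect_poly h2 dvd a \<longrightarrow> reflect_poly h1 dvd b - P1 * a
        \<longrightarrow> g1 dvd a \<and> g2 dvd b - v1 * a)" (is "_ \<longleftrightarrow> ?Q")
  proof
    assume H: "symp_dual_containing m ?D"
    show ?Q
    proof (intro allI impI)
      fix a b :: "'a poly"
      assume da: "degree a < m" and db: "degree b < m" and "reflect_poly h2 dvd a" "reflect_poly h1 dvd b - P1 * a"
      then have "codeword m a b \<in> symp_dual m ?D"
        using memDual[OF m e1 e2 g1 g2 da db] unfolding P1_def by blast
      then have "codeword m a b \<in> ?D" using H unfolding symp_dual_containing_def by blast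
      then show "g1 dvd a \<and> g2 dvd b - v1 * a" using memD[OF m g1N g2N da db] by blast
    qed
  next
    assume Q: ?Q
    show "symp_dual_containing m ?D" unfolding symp_dual_containing_def
    proof
      fix v assume v: "v \<in> symp_dual m ?D"
      then have z: "\<forall>i\<ge>2*m. v i = 0" by (simp add: symp_dual_def)
      define a :: "'a poly" where "a = (\<Sum>i<m. monom (v i) i)"
      define b :: "'a poly" where "b = (\<Sum>i<m. monom (v (m + i)) i)"
      have va: "v = codeword m a b" unfolding a_def b_def by (rule codeword_rep[OF m z])
      have da: "degree a < m" unfolding a_def by (rule degree_vp[OF m])
      have db: "degree b < m" unfolding b_def by (rule degree_vp[OF m])
      have "reflect_poly h2 dvd a \<and> reflect_poly h1 dvd b - P1 * a"
        using v va memDual[OF m e1 e2 g1 g2 da db] unfolding P1_def by simp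
      then have "g1 dvd a \<and> g2 dvd b - v1 * a" using Q da db by blast
      then show "v \<in> ?D" using va memD[OF m g1N g2N da db] by simp
    qed
  qed
  have R1: "g2 dvd rmod m (rperp m g2 * (rbar m v1 - v1)) \<longleftrightarrow> g2 dvd reflect_poly h2 * (P1 - v1)"
  proof -
    have E: "rperp m g2 * (rbar m v1 - v1) = smult (inverse (coeff h2 0)) (reflect_poly h2 * (P1 mod ?N - v1))"
      by (simp add: rp2 rbar_PP[OF m] P1_def)
    have "g2 dvd rmod m (rperp m g2 * (rbar m v1 - v1)) \<longleftrightarrow> g2 dvd rperp m g2 * (rbar m v1 - v1)"
      unfolding rmod_def by (rule dvd_mod_cong[OF g2N]) simp
    also have "\<dots> \<longleftrightarrow> g2 dvd smult (inverse (coeff h2 0)) (reflect_poly h2 * (P1 mod ?N - v1))"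
      by (simp only: E)
    also have "\<dots> \<longleftrightarrow> g2 dvd reflect_poly h2 * (P1 mod ?N - v1)"
      using c2 by (simp add: dvd_smult_iff)
    also have "\<dots> \<longleftrightarrow> g2 dvd reflect_poly h2 * (P1 - v1)"
    proof (rule dvd_mod_cong[OF g2N])
      show "(reflect_poly h2 * (P1 mod ?N - v1)) mod ?N = (reflect_poly h2 * (P1 - v1)) mod ?N"
        by (metis mod_diff_left_eq mod_mult_right_eq)
    qed
    finally show ?thesis .
  qed
  have R2: "g2 dvd rmod m (rperp m g1) \<longleftrightarrow> g2 dvd reflect_poly h1"
  proof -
    have "g2 dvd rmod m (rperp m g1) \<longleftrightarrow> g2 dvd rperp m g1"
      unfolding rmod_def by (rule dvd_mod_cong[OF g2N]) simp
    also have "\<dots> \<longleftrightarrow> g2 dvd reflect_poly h1" using c1 by (simp add: rp1 dvd_smult_iff)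
    finally show ?thesis .
  qed
  have "?Q \<longleftrightarrow> g2 dvd reflect_poly h2 * (P1 - v1) \<and> g2 dvd reflect_poly h1"
  proof
    assume Q: ?Q
    have A1: "g2 dvd reflect_poly h1"
    proof -
      define b where "b = reflect_poly h1 mod ?N"
      have db: "degree b < m" unfolding b_def by (rule degree_mod_xm1[OF m])
      have "reflect_poly h1 dvd b" unfolding b_def by (rule dvd_mod[OF dvd_refl rh1N])
      then have "g2 dvd b - v1 * 0" using Q[rule_format, of 0 b] db m by simp
      then have "g2 dvd b" by simp
      then show ?thesis using dvd_mod_cong[OF g2N, of b "reflect_poly h1"] unfolding b_def by simp
    qed
    have A2: "g2 dvd reflect_poly h2 * (P1 - v1)"
    proof -
      define a where "a = reflect_poly h2 mod ?N"
      define b where "b = (P1 * a) mod ?N"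
      have da: "degree a < m" unfolding a_def by (rule degree_mod_xm1[OF m])
      have db: "degree b < m" unfolding b_def by (rule degree_mod_xm1[OF m])
      have ra: "reflect_poly h2 dvd a" unfolding a_def by (rule dvd_mod[OF dvd_refl rh2N])
      have "?N dvd b - P1 * a" unfolding b_def by (rule dvd_mod_self)
      then have "reflect_poly h1 dvd b - P1 * a" using rh1N by (rule dvd_trans[rotated])
      then have "g2 dvd b - v1 * a" using Q[rule_format, of a b] da db ra by blast
      moreover have "(b - v1 * a) mod ?N = (reflect_poly h2 * (P1 - v1)) mod ?N"
      proof -
        have "(b - v1 * a) mod ?N = (P1 * a - v1 * a) mod ?N" unfolding b_def by (metis mod_diff_left_eq)
        also have "P1 * a - v1 * a = (P1 - v1) * a" by (simp add: algebra_simps)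
        also have "((P1 - v1) * a) mod ?N = ((P1 - v1) * reflect_poly h2) mod ?N"
          unfolding a_def by (metis mod_mult_right_eq)
        finally show ?thesis by (simp add: mult.commute)
      qed
      ultimately show ?thesis using dvd_mod_cong[OF g2N] by blast
    qed
    show "g2 dvd reflect_poly h2 * (P1 - v1) \<and> g2 dvd reflect_poly h1" using A1 A2 by blast
  next
    assume C: "g2 dvd reflect_poly h2 * (P1 - v1) \<and> g2 dvd reflect_poly h1"
    have g1rh2: "g1 dvd reflect_poly h2" by (rule dual_div[OF m e1 e2 c1 g2]) (use C in blast)
    show ?Q
    proof (intro allI impI)
      fix a b :: "'a poly"
      assume "reflect_poly h2 dvd a" and hb: "reflect_poly h1 dvd b - P1 * a"
      then obtain s where s: "a = reflect_poly h2 * s" by blast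
      have "g1 dvd a" using g1rh2 s by simp
      moreover have "g2 dvd b - v1 * a"
      proof -
        have "b - v1 * a = (b - P1 * a) + (reflect_poly h2 * (P1 - v1)) * s"
          using s by (simp add: algebra_simps)
        moreover have "g2 dvd b - P1 * a" using C hb by (metis dvd_trans)
        moreover have "g2 dvd (reflect_poly h2 * (P1 - v1)) * s" using C by simp
        ultimately show ?thesis by (metis dvd_add)
      qed
      ultimately show "g1 dvd a \<and> g2 dvd b - v1 * a" ..
    qed
  qed
  then show ?thesis using L R1 R2 by blast
qed


end
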